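(* There are infinitely many positive integers $N$ for which there are no antipalindromic numbers $A,B$ (in base $2$) with $N=A/B$.
   Context: A positive integer $n$ is antipalindromic if its binary representation $w=w_1\cdots w_L$ (most significant digit first, no leading zeros) has even length $L$ and satisfies $w_i+w_{L+1-i}=1$ for all $i$. *)

theory Defs
  imports Main
begin

definition bin_len :: "nat \<Rightarrow> nat" where
  "bin_len n = (LEAST L. n < 2 ^ L)"

definition bin_digit :: "nat \<Rightarrow> nat \<Rightarrow> nat" where
  "bin_digit n j = (n div 2 ^ j) mod 2"

text \<open>With w_1 ... w_L the digits most significant first, w_i = bin_digit n (L - i).
  The condition w_i + w_(L+1-i) = 1 for all i in 1..L becomes the condition below.\<close>
definition antipalindromic :: "nat \<Rightarrow> bool" where
  "antipalindromic n \<longleftrightarrow> n > 0 \<and> even (bin_len n) \<and>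
     (\<forall>i\<in>{1..bin_len n}. bin_digit n (bin_len n - i) + bin_digit n (i - 1) = 1)"

end

theory Submission
  imports Defs
begin

lemma bin_len_bounds:
  assumes "B > 0"
  shows "B < 2 ^ bin_len B" "2 ^ (bin_len B - 1) \<le> B" "bin_len B > 0"
proof -
  have ex: "\<exists>L. B < 2 ^ L" by (metis less_exp)
  show a: "B < 2 ^ bin_len B" unfolding bin_len_def by (rule LeastI_ex[OF ex])
  show "bin_len B > 0" using a assms by (cases "bin_len B") auto
  show "2 ^ (bin_len B - 1) \<le> B"
  proof (rule ccontr)
    assume "\<not> 2 ^ (bin_len B - 1) \<le> B"
    then have "B < 2 ^ (bin_len B - 1)" by simp
    then have "bin_len B \<le> bin_len B - 1" unfolding bin_len_def by (rule Least_le)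
    with \<open>bin_len B > 0\<close> show False by simp
  qed
qed

lemma bin_len_mult:
  assumes "B > 0"
  shows "bin_len (2 ^ m * B) = bin_len B + m"
proof -
  note b = bin_len_bounds[OF assms]
  show ?thesis unfolding bin_len_def[of "2^m*B"]
  proof (rule Least_equality)
    show "2 ^ m * B < 2 ^ (bin_len B + m)" using b(1) by (simp add: power_add)
  next
    fix y assume y: "2 ^ m * B < 2 ^ y"
    show "bin_len B + m \<le> y"
    proof (rule ccontr)
      assume "\<not> ?thesis"
      then have "y \<le> (bin_len B - 1) + m" using b(3) by simp
      then have "(2::nat) ^ y \<le> 2 ^ ((bin_len B - 1) + m)" by (simp add: power_increasing)
      also have "\<dots> = 2 ^ m * 2 ^ (bin_len B - 1)" by (simp add: power_add)
      also have "\<dots> \<le> 2 ^ m * B" using b(2) by simp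
      finally show False using y by simp
    qed
  qed
qed

lemma odd_decomp:
  fixes n :: nat
  shows "n > 0 \<Longrightarrow> \<exists>t q. n = 2 ^ t * q \<and> odd q"
proof (induction n rule: less_induct)
  case (less n)
  show ?case
  proof (cases "even n")
    case True
    then obtain k where k: "n = 2 * k" by blast
    with less.prems have "k > 0" "k < n" by auto
    with less.IH obtain t q where "k = 2 ^ t * q" "odd q" by blast
    with k have "n = 2 ^ Suc t * q" by simp
    with \<open>odd q\<close> show ?thesis by blast
  next
    case False
    then have "n = 2 ^ 0 * n" by simp
    with False show ?thesis by blast
  qed
qed

lemma no_rep:
  assumes m: "m > 0" and A: "antipalindromic (2 ^ m * B)" and B: "antipalindromic B"
  shows False
proof -
  have Bp: "B > 0" using B unfolding antipalindromic_def by simp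
  define M where "M = bin_len B"
  have LA: "bin_len (2 ^ m * B) = M + m" using bin_len_mult[OF Bp] M_def by simp
  obtain t q where Bq: "B = 2 ^ t * q" and qodd: "odd q"
    using odd_decomp[OF Bp] by blast
  have dBt: "bin_digit B t = 1" unfolding bin_digit_def Bq using qodd
    by (simp add: odd_iff_mod_2_eq_one)
  have dAt: "bin_digit (2 ^ m * B) t = 0" unfolding bin_digit_def Bq using m
    by (simp add: power_add[symmetric] power_add)
  have "2 ^ t \<le> B" using Bq qodd by (cases q) auto
  also have "B < 2 ^ M" using bin_len_bounds[OF Bp] M_def by simp
  finally have tM: "t < M" by simp
  have rB: "bin_digit B (M - (t+1)) + bin_digit B (t + 1 - 1) = 1"
  proof -
    have "\<forall>i\<in>{1..M}. bin_digit B (M - i) + bin_digit B (i - 1) = 1"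
      using B unfolding antipalindromic_def M_def by simp
    moreover have "t + 1 \<in> {1..M}" using tM by simp
    ultimately show ?thesis by blast
  qed
  have rA: "bin_digit (2^m*B) (M + m - (t+1)) + bin_digit (2^m*B) (t + 1 - 1) = 1"
  proof -
    have "\<forall>i\<in>{1..M+m}. bin_digit (2^m*B) (M + m - i) + bin_digit (2^m*B) (i - 1) = 1"
      using A unfolding antipalindromic_def LA by simp
    moreover have "t + 1 \<in> {1..M+m}" using tM by simp
    ultimately show ?thesis by blast
  qed
  have "bin_digit (2^m*B) (M + m - (t+1)) = bin_digit B (M - (t+1))"
  proof -
    have "M + m - (t+1) = m + (M - (t+1))" using tM by simp
    then show ?thesis unfolding bin_digit_def by (simp add: power_add div_mult2_eq)
  qed
  with rA rB dAt dBt show False by simp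
qed

theorem theorem17:
  shows "infinite {N :: nat. N > 0 \<and>
           \<not> (\<exists>A B. antipalindromic A \<and> antipalindromic B \<and> A = N * B)}"
proof (rule infinite_super)
  show "range (\<lambda>m. (2::nat) ^ Suc m) \<subseteq> {N :: nat. N > 0 \<and>
           \<not> (\<exists>A B. antipalindromic A \<and> antipalindromic B \<and> A = N * B)}"
    using no_rep[of "Suc _"] by (auto simp del: power_Suc)
  have "inj (\<lambda>m. (2::nat) ^ Suc m)" by (rule injI) simp
  then show "infinite (range (\<lambda>m. (2::nat) ^ Suc m))" using finite_imageD[of _ UNIV] by (metis infinite_UNIV_nat inj_on_subset subset_UNIV)
qed

end
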